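(* Let $\beta_\gamma$ be the bundle event structure with events $\{a,b,c\}$ (distinct), conflict $a\#b$ (and $b\#a$), and the single bundle $\{a,b\}\mapsto c$; its configurations are $\emptyset,\{a\},\{b\},\{a,c\},\{b,c\}$. Then there is no GES $\gamma$ with $\mathcal{C}(\gamma)=\mathcal{C}(\beta_\gamma)$.
   Context: A bundle event structure (BES) is $\beta=(E,\#,\mapsto)$ with $\#\subseteq E^2$ irreflexive and symmetric, $\mapsto\subseteq 2^E\times E$, satisfying stability: if $X\mapsto e$ then $e_1\#e_2$ for all distinct $e_1,e_2\in X$. Its traces are finite sequences $e_1\cdots e_n$ of pairwise distinct events, pairwise not in conflict, such that $X\mapsto e_i$ implies $X\cap\{e_1,\ldots,e_{i-1}\}\neq\emptyset$; its configurations $\mathcal{C}(\beta)$ are the event sets of its traces. A GES is $\gamma=(E,\#,\to,\lhd)$ with $\#\subseteq E^2$ irreflexive symmetric, $\to\subseteq E^2$, $\lhd\subseteq E^3$ with $(c,m,t)\in\lhd$ ("$m$ adds cause $c$ to $t$") implying $\neg(c\to t)$. $\mathrm{ic}(e)=\{e'\mid e'\to e\}$, $\mathrm{ac}(H,e)=\{e'\mid\exists a\in H.(e',a,e)\in\lhd\}$. $X\to_g Y$ iff $X\subseteq Y\subseteq E$, $Y$ conflict-free, $\mathrm{ic}(e)\cup\mathrm{ac}(X,e)\subseteq X$ for all $e\in Y\setminus X$, and for all $t,m\in Y\setminus X$, $c\in E$: $(c,m,t)\in\lhd\Rightarrow c\in X$. $\mathcal{C}(\gamma)$ is the set of subsets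 of $E$ reachable from $\emptyset$ by finitely many $\to_g$-transitions. *)

theory Defs
  imports Main
begin

text \<open>A BES is given by its event set E, conflict relation cf and bundle relation bun
  (pairs (X, e) meaning X \<mapsto> e).\<close>

definition is_BES :: "'a set \<Rightarrow> ('a \<times> 'a) set \<Rightarrow> ('a set \<times> 'a) set \<Rightarrow> bool" where
  "is_BES E cf bun \<longleftrightarrow>
     cf \<subseteq> E \<times> E \<and> irrefl cf \<and> sym cf \<and>
     (\<forall>(X, e) \<in> bun. X \<subseteq> E \<and> e \<in> E) \<and>
     (\<forall>(X, e) \<in> bun. \<forall>e1 \<in> X. \<forall>e2 \<in> X. e1 \<noteq> e2 \<longrightarrow> (e1, e2) \<in> cf)"

definition BES_trace :: "'a set \<Rightarrow> ('a \<times> 'a) set \<Rightarrow> ('a set \<times> 'a) set \<Rightarrow> 'a list \<Rightarrow> bool" where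
  "BES_trace E cf bun t \<longleftrightarrow>
     set t \<subseteq> E \<and> distinct t \<and>
     (\<forall>i < length t. \<forall>j < length t. (t ! i, t ! j) \<notin> cf) \<and>
     (\<forall>i < length t. \<forall>X. (X, t ! i) \<in> bun \<longrightarrow> X \<inter> set (take i t) \<noteq> {})"

definition BES_configs :: "'a set \<Rightarrow> ('a \<times> 'a) set \<Rightarrow> ('a set \<times> 'a) set \<Rightarrow> 'a set set" where
  "BES_configs E cf bun = {set t | t. BES_trace E cf bun t}"

text \<open>A GES is given by events E, conflict cf, initial causality ca (pairs (e', e) meaning
  e' \<rightarrow> e) and adding relation ad (triples (c, m, t): m adds cause c to t).\<close>

definition is_GES :: "'a set \<Rightarrow> ('a \<times> 'a) set \<Rightarrow> ('a \<times> 'a) set \<Rightarrow> ('a \<times> 'a \<times> 'a) set \<Rightarrow> bool" where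
  "is_GES E cf ca ad \<longleftrightarrow>
     cf \<subseteq> E \<times> E \<and> irrefl cf \<and> sym cf \<and> ca \<subseteq> E \<times> E \<and> ad \<subseteq> E \<times> E \<times> E \<and>
     (\<forall>c m t. (c, m, t) \<in> ad \<longrightarrow> (c, t) \<notin> ca)"

definition ic :: "('a \<times> 'a) set \<Rightarrow> 'a \<Rightarrow> 'a set" where
  "ic ca e = {e'. (e', e) \<in> ca}"

definition ac :: "('a \<times> 'a \<times> 'a) set \<Rightarrow> 'a set \<Rightarrow> 'a \<Rightarrow> 'a set" where
  "ac ad H e = {e'. \<exists>a \<in> H. (e', a, e) \<in> ad}"

definition GES_step ::
  "'a set \<Rightarrow> ('a \<times> 'a) set \<Rightarrow> ('a \<times> 'a) set \<Rightarrow> ('a \<times> 'a \<times> 'a) set \<Rightarrow> 'a set \<Rightarrow> 'a set \<Rightarrow> bool" where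
  "GES_step E cf ca ad X Y \<longleftrightarrow>
     X \<subseteq> Y \<and> Y \<subseteq> E \<and>
     (\<forall>e1 \<in> Y. \<forall>e2 \<in> Y. (e1, e2) \<notin> cf) \<and>
     (\<forall>e \<in> Y - X. ic ca e \<union> ac ad X e \<subseteq> X) \<and>
     (\<forall>t \<in> Y - X. \<forall>m \<in> Y - X. \<forall>c \<in> E. (c, m, t) \<in> ad \<longrightarrow> c \<in> X)"

definition GES_configs :: "'a set \<Rightarrow> ('a \<times> 'a) set \<Rightarrow> ('a \<times> 'a) set \<Rightarrow> ('a \<times> 'a \<times> 'a) set \<Rightarrow> 'a set set" where
  "GES_configs E cf ca ad = {Y. (GES_step E cf ca ad)\<^sup>*\<^sup>* {} Y}"

end

theory Submission
  imports Defs
begin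

lemma reach_sub:
  assumes "(GES_step E cf ca ad)\<^sup>*\<^sup>* {} Y" shows "Y \<subseteq> E"
  using assms by (induction rule: rtranclp_induct) (auto simp: GES_step_def)

lemma reach_c:
  assumes "(GES_step E cf ca ad)\<^sup>*\<^sup>* {} Y" "c \<in> Y" "ad \<subseteq> E \<times> E \<times> E"
  shows "\<exists>X. (GES_step E cf ca ad)\<^sup>*\<^sup>* {} X \<and> X \<subseteq> Y \<and> c \<notin> X \<and> ic ca c \<subseteq> X
           \<and> (\<forall>x. (x, c, c) \<in> ad \<longrightarrow> x \<in> X)"
  using assms
proof (induction rule: rtranclp_induct)
  case base then show ?case by simp
next
  case (step y z)
  show ?case
  proof (cases "c \<in> y")
    case True
    with step obtain X where "(GES_step E cf ca ad)\<^sup>*\<^sup>* {} X \<and> X \<subseteq> y \<and> c \<notin> X \<and> ic ca c \<subseteq> X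
           \<and> (\<forall>x. (x, c, c) \<in> ad \<longrightarrow> x \<in> X)" by blast
    moreover have "y \<subseteq> z" using step(2) by (simp add: GES_step_def)
    ultimately show ?thesis by blast
  next
    case False
    have st: "GES_step E cf ca ad y z" by fact
    have "ic ca c \<subseteq> y" using st False step(4) unfolding GES_step_def by blast
    moreover have "\<forall>x. (x, c, c) \<in> ad \<longrightarrow> x \<in> y"
    proof (intro allI impI)
      fix x assume "(x, c, c) \<in> ad"
      moreover then have "x \<in> E" using step(5) by blast
      ultimately show "x \<in> y" using st False step(4) unfolding GES_step_def by blast
    qed
    ultimately show ?thesis using step(1) st False unfolding GES_step_def by blast
  qed
qed

theorem lemma11:
  fixes a b c :: 'a
  assumes "a \<noteq> b" and "a \<noteq> c" and "b \<noteq> c"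
  shows "\<not> (\<exists>E cf ca ad. is_GES E cf ca ad \<and>
            GES_configs E cf ca ad = BES_configs {a, b, c} {(a, b), (b, a)} {({a, b}, c)})"
proof
  assume "\<exists>E cf ca ad. is_GES E cf ca ad \<and>
            GES_configs E cf ca ad = BES_configs {a, b, c} {(a, b), (b, a)} {({a, b}, c)}"
  then obtain E cf ca ad where G: "is_GES E cf ca ad"
    and eq: "GES_configs E cf ca ad = BES_configs {a, b, c} {(a, b), (b, a)} {({a, b}, c)}" by blast
  let ?R = "(GES_step E cf ca ad)\<^sup>*\<^sup>* {}"
  have tr1: "BES_trace {a, b, c} {(a, b), (b, a)} {({a, b}, c)} [a, c]"
    using assms unfolding BES_trace_def by (auto simp: less_Suc_eq nth_Cons split: nat.splits)
  have tr2: "BES_trace {a, b, c} {(a, b), (b, a)} {({a, b}, c)} [b, c]"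
    using assms unfolding BES_trace_def by (auto simp: less_Suc_eq nth_Cons split: nat.splits)
  have ac: "?R {a, c}" using tr1 eq unfolding BES_configs_def GES_configs_def by force
  have bc: "?R {b, c}" using tr2 eq unfolding BES_configs_def GES_configs_def by force
  have notc: "{c} \<notin> BES_configs {a, b, c} {(a, b), (b, a)} {({a, b}, c)}"
  proof
    assume "{c} \<in> BES_configs {a, b, c} {(a, b), (b, a)} {({a, b}, c)}"
    then obtain t where t: "BES_trace {a, b, c} {(a, b), (b, a)} {({a, b}, c)} t" "set t = {c}"
      unfolding BES_configs_def by blast
    then have "distinct t" by (simp add: BES_trace_def)
    with t(2) have "length t = 1" by (metis distinct_card card.empty card_insert_disjoint empty_iff finite.emptyI One_nat_def)
    then obtain x where "t = [x]" by (cases t) auto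
    with t(2) have "t = [c]" by simp
    with t(1) show False unfolding BES_trace_def by auto
  qed
  have adE: "ad \<subseteq> E \<times> E \<times> E" using G by (simp add: is_GES_def)
  obtain X where X: "?R X" "X \<subseteq> {a, c}" "c \<notin> X" "ic ca c \<subseteq> X" "\<forall>x. (x, c, c) \<in> ad \<longrightarrow> x \<in> X"
    using reach_c[OF ac _ adE] by blast
  obtain Y where Y: "?R Y" "Y \<subseteq> {b, c}" "c \<notin> Y" "ic ca c \<subseteq> Y" "\<forall>x. (x, c, c) \<in> ad \<longrightarrow> x \<in> Y"
    using reach_c[OF bc _ adE] by blast
  have XY: "X \<inter> Y = {}" using X(2,3) Y(2,3) assms by blast
  have icc: "ic ca c = {}" using X(4) Y(4) XY by blast
  have noad: "\<forall>x. (x, c, c) \<notin> ad" using X(5) Y(5) XY by blast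
  have cE: "c \<in> E" using reach_sub[OF ac] by blast
  have irr: "(c, c) \<notin> cf" using G by (simp add: is_GES_def irrefl_def)
  have "GES_step E cf ca ad {} {c}"
    unfolding GES_step_def using cE irr icc noad by (auto simp: ac_def)
  then have "?R {c}" by blast
  then show False using notc eq unfolding GES_configs_def by blast
qed

end
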